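(* Let $p\ge1$, let $\mathbf Z\sim\mathcal N(\mathbf 0,\mathbf I_p)$, let $V>0$ be a random variable, and let $\mathbf X$ be a random vector in $\mathbb R^p$ with an arbitrary distribution $P_{\mathbf X}$, where $\mathbf X$, $V$, $\mathbf Z$ are mutually independent. Put $\mathbf N=\sqrt V\,\mathbf Z$ and $\mathbf Y=\mathbf X+\mathbf N$. Then $$0\le I(\mathbf X;\mathbf Y\mid V)-I(\mathbf X;\mathbf Y)\le I(V;\sqrt V\,\mathbf Z).$$
   Context: $I(\cdot;\cdot)$ and $I(\cdot;\cdot\mid\cdot)$ denote mutual information and conditional mutual information. *)

theory Defs
  imports "HOL-Probability.Probability"
begin

text \<open>Mutual information (natural logarithm), valued in the extended reals:
  the Kullback--Leibler divergence of the joint law from the product of the marginals,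
  which is +infinity when the joint law is not absolutely continuous w.r.t. the product
  of the marginals or when the log-density is not integrable (its negative part is always
  integrable, so non-integrability means the divergence is +infinity).\<close>
definition MI :: "'a measure \<Rightarrow> 'b measure \<Rightarrow> 'c measure \<Rightarrow> ('a \<Rightarrow> 'b) \<Rightarrow> ('a \<Rightarrow> 'c) \<Rightarrow> ereal" where
  "MI M S T X Y =
    (let P = distr M S X \<Otimes>\<^sub>M distr M T Y;
         Q = distr M (S \<Otimes>\<^sub>M T) (\<lambda>x. (X x, Y x))
     in if absolutely_continuous P Q \<and> integrable Q (entropy_density (exp 1) P Q)
        then ereal (KL_divergence (exp 1) P Q) else \<infinity>)"

definition CMI :: "'a measure \<Rightarrow> 'b measure \<Rightarrow> 'c measure \<Rightarrow> 'd measure \<Rightarrow>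
    ('a \<Rightarrow> 'b) \<Rightarrow> ('a \<Rightarrow> 'c) \<Rightarrow> ('a \<Rightarrow> 'd) \<Rightarrow> ereal" where
  "CMI M S T U X Y Z = MI M S (T \<Otimes>\<^sub>M U) X (\<lambda>x. (Y x, Z x)) - MI M S U X Z"

definition std_gauss_density :: "real^'p \<Rightarrow> ennreal" where
  "std_gauss_density z = ennreal ((2 * pi) powr (- real CARD('p) / 2) * exp (- (norm z)\<^sup>2 / 2))"

definition indep3 :: "'a measure \<Rightarrow> 'b measure \<Rightarrow> ('a \<Rightarrow> 'b) \<Rightarrow> 'c measure \<Rightarrow> ('a \<Rightarrow> 'c)
    \<Rightarrow> 'd measure \<Rightarrow> ('a \<Rightarrow> 'd) \<Rightarrow> bool" where
  "indep3 M SX X SV V SZ Z \<longleftrightarrow>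
    X \<in> measurable M SX \<and> V \<in> measurable M SV \<and> Z \<in> measurable M SZ \<and>
    prob_space.indep_sets M
      (\<lambda>i::nat. if i = 0 then sigma_sets (space M) {X -` A \<inter> space M | A. A \<in> sets SX}
                else if i = 1 then sigma_sets (space M) {V -` A \<inter> space M | A. A \<in> sets SV}
                else sigma_sets (space M) {Z -` A \<inter> space M | A. A \<in> sets SZ})
      {0, 1, 2}"

end

theory Submission
  imports Defs
begin

definition phi :: "real \<Rightarrow> real^'p \<Rightarrow> ennreal" where
  "phi v n = ennreal ((2 * pi * v) powr (- real CARD('p) / 2) * exp (- (norm n)\<^sup>2 / (2 * v)))"

lemma phi_measurable[measurable]: "(\<lambda>(v, n). phi v n) \<in> borel_measurable (borel \<Otimes>\<^sub>M borel)"
  unfolding phi_def by measurable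

lemma phi_scale:
  fixes z :: "real^'p"
  assumes v: "v > 0"
  shows "ennreal (\<bar>sqrt v\<bar> ^ CARD('p)) * phi v (sqrt v *\<^sub>R z) = std_gauss_density z"
proof -
  have 1: "sqrt v ^ CARD('p) = v powr (real CARD('p) / 2)"
    using v by (simp add: powr_half_sqrt[symmetric] powr_power field_simps)
  have 2: "(2 * pi * v) powr (- real CARD('p) / 2) = (2*pi) powr (- real CARD('p) / 2) * v powr (- real CARD('p) / 2)"
    by (simp add: powr_mult)
  have 3: "v powr (real CARD('p) / 2) * v powr (- real CARD('p) / 2) = 1"
    using v by (simp add: powr_add[symmetric])
  have 4: "(norm (sqrt v *\<^sub>R z))\<^sup>2 / (2 * v) = (norm z)\<^sup>2 / 2"
    using v by (simp add: power_mult_distrib)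
  have "\<bar>sqrt v\<bar> ^ CARD('p) * ((2 * pi * v) powr (- real CARD('p) / 2) * exp (- (norm (sqrt v *\<^sub>R z))\<^sup>2 / (2 * v)))
     = (2 * pi) powr (- real CARD('p) / 2) * exp (- (norm z)\<^sup>2 / 2)"
    using v 1 2 3 4 by (simp add: algebra_simps)
  then show ?thesis
    unfolding phi_def std_gauss_density_def
    by (subst ennreal_mult[symmetric]) auto
qed

lemma gauss_kernel:
  fixes G :: "real^'p \<Rightarrow> ennreal" and x :: "real^'p"
  assumes G[measurable]: "G \<in> borel_measurable borel" and v: "v > 0"
  shows "(\<integral>\<^sup>+z. G (x + sqrt v *\<^sub>R z) \<partial>density lborel std_gauss_density)
       = (\<integral>\<^sup>+y. G y * phi v (y - x) \<partial>lborel)"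
proof -
  define c where "c = sqrt v"
  have c: "c \<noteq> 0" using v by (simp add: c_def)
  have eq: "(lborel :: (real^'p) measure) = density (distr lborel borel (\<lambda>z. x + c *\<^sub>R z)) (\<lambda>_. \<bar>c\<bar> ^ DIM(real^'p))"
    by (rule lborel_affine[OF c])
  have gm[measurable]: "std_gauss_density \<in> borel_measurable (borel :: (real^'p) measure)"
    unfolding std_gauss_density_def by measurable
  have "(\<integral>\<^sup>+y. G y * phi v (y - x) \<partial>lborel)
      = (\<integral>\<^sup>+y. G y * phi v (y - x) \<partial>density (distr lborel borel (\<lambda>z. x + c *\<^sub>R z)) (\<lambda>_. \<bar>c\<bar> ^ DIM(real^'p)))"
    by (rule arg_cong[where f="\<lambda>m. integral\<^sup>N m (\<lambda>y. G y * phi v (y - x))", OF eq])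
  also have "\<dots> = (\<integral>\<^sup>+z. ennreal (\<bar>c\<bar> ^ CARD('p)) * (G (x + c *\<^sub>R z) * phi v (c *\<^sub>R z)) \<partial>lborel)"
    by (simp add: nn_integral_density nn_integral_distr)
  also have "\<dots> = (\<integral>\<^sup>+z. std_gauss_density z * G (x + c *\<^sub>R z) \<partial>lborel)"
    by (intro nn_integral_cong) (simp add: phi_scale[OF v, symmetric] c_def mult_ac)
  also have "\<dots> = (\<integral>\<^sup>+z. G (x + sqrt v *\<^sub>R z) \<partial>density lborel std_gauss_density)"
    by (simp add: nn_integral_density c_def)
  finally show ?thesis ..
qed



lemma MI_density:
  fixes M :: "'a measure" and S :: "'b measure" and T :: "'c measure"
    and fQ fP :: "'b \<times> 'c \<Rightarrow> ennreal"
  assumes M: "prob_space M"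
    and Xm[measurable]: "X \<in> measurable M S" and Ym[measurable]: "Y \<in> measurable M T"
    and sR: "sets R = sets (S \<Otimes>\<^sub>M T)"
    and fQm: "fQ \<in> borel_measurable R" and fPm: "fP \<in> borel_measurable R"
    and hP: "distr M S X \<Otimes>\<^sub>M distr M T Y = density R fP"
    and hQ: "distr M (S \<Otimes>\<^sub>M T) (\<lambda>\<omega>. (X \<omega>, Y \<omega>)) = density R fQ"
    and fin: "AE z in R. fP z \<noteq> \<infinity>" and pos: "AE z in R. fP z > 0"
  shows "MI M S T X Y = (if integrable M (\<lambda>\<omega>. ln (enn2real (fQ (X \<omega>, Y \<omega>) / fP (X \<omega>, Y \<omega>))))
        then ereal (\<integral>\<omega>. ln (enn2real (fQ (X \<omega>, Y \<omega>) / fP (X \<omega>, Y \<omega>))) \<partial>M) else \<infinity>)"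
proof -
  interpret M: prob_space M by (rule M)
  define P where "P = distr M S X \<Otimes>\<^sub>M distr M T Y"
  define Q where "Q = distr M (S \<Otimes>\<^sub>M T) (\<lambda>\<omega>. (X \<omega>, Y \<omega>))"
  define f where "f = (\<lambda>z. fQ z / fP z)"
  have sP: "sets P = sets (S \<Otimes>\<^sub>M T)" unfolding P_def by simp
  have sQ: "sets Q = sets (S \<Otimes>\<^sub>M T)" unfolding Q_def by simp
  have fR: "f \<in> borel_measurable R" unfolding f_def using fQm fPm by measurable
  have fST[measurable]: "f \<in> borel_measurable (S \<Otimes>\<^sub>M T)" using fR unfolding measurable_cong_sets[OF sR refl] .
  have fP': "f \<in> borel_measurable P" using fST unfolding measurable_cong_sets[OF sP refl] .
  have fPP: "fP \<in> borel_measurable R" by fact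
  have probP: "prob_space P" unfolding P_def
    by (intro prob_space_pair M.prob_space_distr Xm Ym)
  then interpret P: prob_space P .
  have QP: "Q = density P f"
  proof -
    have "density P f = density (density R fP) f" unfolding P_def hP ..
    also have "\<dots> = density R (\<lambda>z. fP z * f z)"
      by (rule density_density_eq[OF fPm fR])
    also have "\<dots> = density R fQ"
    proof (rule density_cong)
      show "(\<lambda>z. fP z * f z) \<in> borel_measurable R" using fPm fR by measurable
      show "fQ \<in> borel_measurable R" by fact
      show "AE z in R. fP z * f z = fQ z"
        using fin pos
      proof (eventually_elim)
        case (elim z)
        then show "fP z * f z = fQ z" unfolding f_def
          using mult_divide_eq_ennreal[of "fP z" "fQ z"]
          by (simp add: ennreal_times_divide mult.commute top.not_eq_extremum)
      qed
    qed
    finally show ?thesis unfolding Q_def hQ ..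
  qed
  have ac: "absolutely_continuous P Q" unfolding QP by (rule absolutely_continuousI_density[OF fP'])
  have RN: "AE z in P. f z = RN_deriv P Q z"
    by (rule P.RN_deriv_unique[OF fP' QP[symmetric]])
  have AEQ: "AE z in Q. entropy_density (exp 1) P Q z = ln (enn2real (f z))"
    unfolding QP[THEN arg_cong[where f="\<lambda>m. AE z in m. entropy_density (exp 1) P Q z = ln (enn2real (f z))"]]
    using RN by (subst AE_density[OF fP']) (auto simp: entropy_density_def log_def elim!: eventually_mono)
  have edm: "entropy_density (exp 1) P Q \<in> borel_measurable Q"
    using measurable_entropy_density[of "exp 1" P Q] unfolding measurable_cong_sets[OF sP refl] measurable_cong_sets[OF sQ refl] .
  have lnm: "(\<lambda>z. ln (enn2real (f z))) \<in> borel_measurable Q" unfolding measurable_cong_sets[OF sQ refl] by measurable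
  have int_eq: "integrable Q (entropy_density (exp 1) P Q) \<longleftrightarrow>
      integrable M (\<lambda>\<omega>. ln (enn2real (f (X \<omega>, Y \<omega>))))"
  proof -
    have "integrable Q (entropy_density (exp 1) P Q) \<longleftrightarrow> integrable Q (\<lambda>z. ln (enn2real (f z)))"
      by (rule integrable_cong_AE[OF edm lnm AEQ])
    also have "\<dots> \<longleftrightarrow> integrable M (\<lambda>\<omega>. ln (enn2real (f (X \<omega>, Y \<omega>))))"
      unfolding Q_def by (rule integrable_distr_eq) measurable
    finally show ?thesis .
  qed
  have intg_eq: "KL_divergence (exp 1) P Q = (\<integral>\<omega>. ln (enn2real (f (X \<omega>, Y \<omega>))) \<partial>M)"
  proof -
    have "KL_divergence (exp 1) P Q = integral\<^sup>L Q (\<lambda>z. ln (enn2real (f z)))"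
      unfolding KL_divergence_def by (rule integral_cong_AE[OF edm lnm AEQ])
    also have "\<dots> = (\<integral>\<omega>. ln (enn2real (f (X \<omega>, Y \<omega>))) \<partial>M)"
      unfolding Q_def by (rule integral_distr) measurable
    finally show ?thesis .
  qed
  show ?thesis
    unfolding MI_def Let_def P_def[symmetric] Q_def[symmetric] using ac int_eq intg_eq
    by (simp add: f_def)
qed

lemma (in prob_space) indep_pair_distr:
  assumes ind: "indep_sets F I" and ij: "i \<in> I" "j \<in> I" "i \<noteq> j"
    and A[measurable]: "A \<in> measurable M SA" and B[measurable]: "B \<in> measurable M SB"
    and FA: "\<And>S. S \<in> sets SA \<Longrightarrow> A -` S \<inter> space M \<in> F i"
    and FB: "\<And>S. S \<in> sets SB \<Longrightarrow> B -` S \<inter> space M \<in> F j"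
  shows "distr M (SA \<Otimes>\<^sub>M SB) (\<lambda>\<omega>. (A \<omega>, B \<omega>)) = distr M SA A \<Otimes>\<^sub>M distr M SB B"
proof (rule pair_measure_eqI[symmetric])
  interpret DA: prob_space "distr M SA A" by (rule prob_space_distr[OF A])
  interpret DB: prob_space "distr M SB B" by (rule prob_space_distr[OF B])
  show "sigma_finite_measure (distr M SA A)" by unfold_locales
  show "sigma_finite_measure (distr M SB B)" by unfold_locales
  show "sets (distr M SA A \<Otimes>\<^sub>M distr M SB B) = sets (distr M (SA \<Otimes>\<^sub>M SB) (\<lambda>\<omega>. (A \<omega>, B \<omega>)))"
    by (simp cong: sets_pair_measure_cong)
  fix S T assume S: "S \<in> sets (distr M SA A)" and T: "T \<in> sets (distr M SB B)"
  then have S': "S \<in> sets SA" and T': "T \<in> sets SB" by auto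
  have eqs: "(\<lambda>\<omega>. (A \<omega>, B \<omega>)) -` (S \<times> T) \<inter> space M = (\<Inter>k\<in>{i,j}. (\<lambda>k. if k = i then A -` S \<inter> space M else B -` T \<inter> space M) k)"
    using ij by auto
  have "prob (\<Inter>k\<in>{i,j}. (\<lambda>k. if k = i then A -` S \<inter> space M else B -` T \<inter> space M) k)
      = (\<Prod>k\<in>{i,j}. prob ((\<lambda>k. if k = i then A -` S \<inter> space M else B -` T \<inter> space M) k))"
    by (rule indep_setsD[OF ind]) (use ij FA[OF S'] FB[OF T'] in auto)
  also have "\<dots> = prob (A -` S \<inter> space M) * prob (B -` T \<inter> space M)"
    using ij by simp
  finally have pr: "prob ((\<lambda>\<omega>. (A \<omega>, B \<omega>)) -` (S \<times> T) \<inter> space M) = prob (A -` S \<inter> space M) * prob (B -` T \<inter> space M)"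
    unfolding eqs .
  show "emeasure (distr M SA A) S * emeasure (distr M SB B) T = emeasure (distr M (SA \<Otimes>\<^sub>M SB) (\<lambda>\<omega>. (A \<omega>, B \<omega>))) (S \<times> T)"
    using S' T' by (simp add: emeasure_distr emeasure_eq_measure pr ennreal_mult)
qed

lemma Int_stable_sigma_sets: "A \<subseteq> Pow \<Omega> \<Longrightarrow> Int_stable (sigma_sets \<Omega> A)"
  by (rule algebra.Int_stable[OF sigma_algebra.axioms(1)[OF sigma_algebra_sigma_sets]])

locale L5 =
  fixes M :: "'a measure" and X Z :: "'a \<Rightarrow> real^'p" and V :: "'a \<Rightarrow> real"
  assumes prob: "prob_space M" and Xm[measurable]: "X \<in> measurable M borel"
    and Vm[measurable]: "V \<in> borel_measurable M" and Vpos: "\<forall>\<omega>\<in>space M. V \<omega> > 0"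
    and Zd: "distributed M lborel Z std_gauss_density"
    and ind: "indep3 M borel X borel V borel Z"
begin

sublocale prob_space M by (rule prob)

lemma Zm[measurable]: "Z \<in> borel_measurable M" using ind by (simp add: indep3_def)

definition "Fam = (\<lambda>i::nat. if i = 0 then sigma_sets (space M) {X -` A \<inter> space M | A. A \<in> sets (borel::(real^'p) measure)}
   else if i = 1 then sigma_sets (space M) {V -` A \<inter> space M | A. A \<in> sets (borel::real measure)}
   else sigma_sets (space M) {Z -` A \<inter> space M | A. A \<in> sets (borel::(real^'p) measure)})"

lemma indF: "indep_sets Fam {0,1,2}" using ind by (simp add: indep3_def Fam_def)

lemma Fam_sub: "Fam i \<subseteq> Pow (space M)"
  unfolding Fam_def by (auto dest: sigma_sets_into_sp[rotated])

lemma XV: "distr M (borel \<Otimes>\<^sub>M borel) (\<lambda>\<omega>. (X \<omega>, V \<omega>)) = distr M borel X \<Otimes>\<^sub>M distr M borel V"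
  by (rule indep_pair_distr[OF indF, of 0 1]) (auto simp: Fam_def intro!: sigma_sets.Basic)

lemma VZ: "distr M (borel \<Otimes>\<^sub>M borel) (\<lambda>\<omega>. (V \<omega>, Z \<omega>)) = distr M borel V \<Otimes>\<^sub>M distr M borel Z"
  by (rule indep_pair_distr[OF indF, of 1 2]) (auto simp: Fam_def intro!: sigma_sets.Basic)

lemma XVZ: "distr M (borel \<Otimes>\<^sub>M (borel \<Otimes>\<^sub>M borel)) (\<lambda>\<omega>. (X \<omega>, (V \<omega>, Z \<omega>)))
   = distr M borel X \<Otimes>\<^sub>M (distr M borel V \<Otimes>\<^sub>M distr M borel Z)"
proof -
  define I where "I = (\<lambda>j::nat. if j = 0 then {0::nat} else {1,2})"
  have ind2: "indep_sets (\<lambda>j. sigma_sets (space M) (\<Union>i\<in>I j. Fam i)) {0,1}"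
  proof (rule indep_sets_collect_sigma)
    have "(\<Union>j\<in>{0,1}. I j) = {0,1,2}" by (auto simp: I_def)
    then show "indep_sets Fam (\<Union>j\<in>{0,1}. I j)" using indF by simp
    show "Int_stable (Fam i)" for i
      unfolding Fam_def by (auto intro!: Int_stable_sigma_sets)
    show "disjoint_family_on I {0,1}" by (auto simp: disjoint_family_on_def I_def)
  qed
  have "distr M (borel \<Otimes>\<^sub>M (borel \<Otimes>\<^sub>M borel)) (\<lambda>\<omega>. (X \<omega>, (V \<omega>, Z \<omega>)))
      = distr M borel X \<Otimes>\<^sub>M distr M (borel \<Otimes>\<^sub>M borel) (\<lambda>\<omega>. (V \<omega>, Z \<omega>))"
  proof (rule indep_pair_distr[OF ind2, of 0 1])
    show "X -` S \<inter> space M \<in> sigma_sets (space M) (\<Union>i\<in>I 0. Fam i)" if "S \<in> sets borel" for S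
      using that by (auto simp: I_def Fam_def intro!: sigma_sets.Basic)
    define \<Sigma> where "\<Sigma> = (\<Union>i\<in>I 1. Fam i)"
    have \<Sigma>sub: "\<Sigma> \<subseteq> Pow (space M)" unfolding \<Sigma>_def using Fam_sub by auto
    define M' where "M' = sigma (space M) \<Sigma>"
    have sM': "sets M' = sigma_sets (space M) \<Sigma>" unfolding M'_def using \<Sigma>sub by (rule sets_measure_of)
    have spM': "space M' = space M" unfolding M'_def using \<Sigma>sub by (rule space_measure_of)
    have "V \<in> measurable M' borel"
    proof (rule measurableI)
      fix A :: "real set" assume "A \<in> sets borel"
      then have "V -` A \<inter> space M \<in> Fam 1" by (auto simp: Fam_def intro!: sigma_sets.Basic)
      then show "V -` A \<inter> space M' \<in> sets M'" unfolding sM' spM' \<Sigma>_def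
        by (auto simp: I_def intro!: sigma_sets.Basic)
    qed simp
    moreover have "Z \<in> measurable M' borel"
    proof (rule measurableI)
      fix A :: "(real^'p) set" assume "A \<in> sets borel"
      then have "Z -` A \<inter> space M \<in> Fam 2" by (auto simp: Fam_def intro!: sigma_sets.Basic)
      then show "Z -` A \<inter> space M' \<in> sets M'" unfolding sM' spM' \<Sigma>_def
        by (auto simp: I_def intro!: sigma_sets.Basic)
    qed simp
    ultimately have VZm: "(\<lambda>\<omega>. (V \<omega>, Z \<omega>)) \<in> measurable M' (borel \<Otimes>\<^sub>M borel)"
      by (rule measurable_Pair)
    show "(\<lambda>\<omega>. (V \<omega>, Z \<omega>)) -` D \<inter> space M \<in> sigma_sets (space M) (\<Union>i\<in>I 1. Fam i)"
      if "D \<in> sets (borel \<Otimes>\<^sub>M borel)" for D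
      using measurable_sets[OF VZm that] unfolding sM' spM' \<Sigma>_def .
  qed (auto)
  also have "\<dots> = distr M borel X \<Otimes>\<^sub>M (distr M borel V \<Otimes>\<^sub>M distr M borel Z)"
    by (simp only: VZ)
  finally show ?thesis .
qed

end



context L5 begin

abbreviation "mu \<equiv> distr M borel X"
abbreviation "nu \<equiv> distr M borel V"
abbreviation "gam \<equiv> distr M borel Z"

lemma gam_eq: "gam = density lborel std_gauss_density"
proof -
  have "gam = distr M lborel Z" by (rule distr_cong) auto
  then show ?thesis using Zd by (simp add: distributed_def)
qed

lemma prob_mu: "prob_space mu" by (rule prob_space_distr) simp
lemma prob_nu: "prob_space nu" by (rule prob_space_distr) simp
lemma prob_gam: "prob_space gam" by (rule prob_space_distr) simp

lemma MF0:
  assumes H[measurable]: "H \<in> borel_measurable (borel \<Otimes>\<^sub>M (borel \<Otimes>\<^sub>M borel))"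
  shows "(\<integral>\<^sup>+\<omega>. H (X \<omega>, V \<omega>, Z \<omega>) \<partial>M) = (\<integral>\<^sup>+x. \<integral>\<^sup>+v. \<integral>\<^sup>+z. H (x, v, z) \<partial>gam \<partial>nu \<partial>mu)"
proof -
  interpret nu: prob_space nu by (rule prob_nu)
  interpret gam: prob_space gam by (rule prob_gam)
  interpret ng: prob_space "nu \<Otimes>\<^sub>M gam" by (intro prob_space_pair prob_nu prob_gam)
  have "(\<integral>\<^sup>+\<omega>. H (X \<omega>, V \<omega>, Z \<omega>) \<partial>M) = integral\<^sup>N (distr M (borel \<Otimes>\<^sub>M (borel \<Otimes>\<^sub>M borel)) (\<lambda>\<omega>. (X \<omega>, (V \<omega>, Z \<omega>)))) H"
    by (simp add: nn_integral_distr)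
  also have "\<dots> = integral\<^sup>N (mu \<Otimes>\<^sub>M (nu \<Otimes>\<^sub>M gam)) H" by (simp only: XVZ)
  also have "\<dots> = (\<integral>\<^sup>+x. \<integral>\<^sup>+w. H (x, w) \<partial>(nu \<Otimes>\<^sub>M gam) \<partial>mu)"
    by (rule ng.nn_integral_fst[symmetric]) simp
  also have "\<dots> = (\<integral>\<^sup>+x. \<integral>\<^sup>+v. \<integral>\<^sup>+z. H (x, v, z) \<partial>gam \<partial>nu \<partial>mu)"
    by (rule nn_integral_cong, rule gam.nn_integral_fst[symmetric]) simp
  finally show ?thesis .
qed

lemma AEnu: "AE v in nu. v > 0"
  using Vpos by (subst AE_distr_iff) auto

lemma MF:
  assumes H[measurable]: "H \<in> borel_measurable (borel \<Otimes>\<^sub>M (borel \<Otimes>\<^sub>M borel))"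
  shows "(\<integral>\<^sup>+\<omega>. H (X \<omega>, V \<omega>, X \<omega> + sqrt (V \<omega>) *\<^sub>R Z \<omega>) \<partial>M)
     = (\<integral>\<^sup>+x. \<integral>\<^sup>+v. \<integral>\<^sup>+y. H (x, v, y) * phi v (y - x) \<partial>lborel \<partial>nu \<partial>mu)"
proof -
  have "(\<integral>\<^sup>+\<omega>. H (X \<omega>, V \<omega>, X \<omega> + sqrt (V \<omega>) *\<^sub>R Z \<omega>) \<partial>M)
      = (\<integral>\<^sup>+x. \<integral>\<^sup>+v. \<integral>\<^sup>+z. H (x, v, x + sqrt v *\<^sub>R z) \<partial>gam \<partial>nu \<partial>mu)"
    by (rule MF0[where H="\<lambda>(x,v,z). H (x, v, x + sqrt v *\<^sub>R z)", simplified]) measurable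
  also have "\<dots> = (\<integral>\<^sup>+x. \<integral>\<^sup>+v. \<integral>\<^sup>+y. H (x, v, y) * phi v (y - x) \<partial>lborel \<partial>nu \<partial>mu)"
  proof (rule nn_integral_cong, rule nn_integral_cong_AE)
    fix x :: "real^'p"
    show "AE v in nu. (\<integral>\<^sup>+z. H (x, v, x + sqrt v *\<^sub>R z) \<partial>gam) = (\<integral>\<^sup>+y. H (x, v, y) * phi v (y - x) \<partial>lborel)"
      using AEnu
    proof (rule eventually_mono)
      fix v :: real assume "v > 0"
      then show "(\<integral>\<^sup>+z. H (x, v, x + sqrt v *\<^sub>R z) \<partial>gam) = (\<integral>\<^sup>+y. H (x, v, y) * phi v (y - x) \<partial>lborel)"
        unfolding gam_eq by (intro gauss_kernel) measurable
    qed
  qed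
  finally show ?thesis .
qed

end



context L5 begin

definition "g (n::real^'p) = (\<integral>\<^sup>+v. phi v n \<partial>nu)"
definition "q v y = (\<integral>\<^sup>+x. phi v (y - x) \<partial>mu)"
definition "p y = (\<integral>\<^sup>+x. g (y - x) \<partial>mu)"

lemma g_meas[measurable]: "g \<in> borel_measurable borel"
proof -
  interpret nu: prob_space nu by (rule prob_nu)
  show ?thesis unfolding g_def[abs_def]
    by (rule nu.borel_measurable_nn_integral) measurable
qed

lemma q_meas[measurable]: "(\<lambda>(v, y). q v y) \<in> borel_measurable (borel \<Otimes>\<^sub>M borel)"
proof -
  interpret mu: prob_space mu by (rule prob_mu)
  have "(\<lambda>w. \<integral>\<^sup>+x. phi (fst w) (snd w - x) \<partial>mu) \<in> borel_measurable (borel \<Otimes>\<^sub>M borel)"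
    by (rule mu.borel_measurable_nn_integral) measurable
  then show ?thesis unfolding q_def by (simp add: case_prod_beta')
qed

lemma p_meas[measurable]: "p \<in> borel_measurable borel"
proof -
  interpret mu: prob_space mu by (rule prob_mu)
  show ?thesis unfolding p_def[abs_def]
    by (rule mu.borel_measurable_nn_integral) measurable
qed

lemma swap_nu:
  assumes [measurable]: "(\<lambda>(v, y). F v y) \<in> borel_measurable (borel \<Otimes>\<^sub>M borel)"
  shows "(\<integral>\<^sup>+v. \<integral>\<^sup>+y. F v y \<partial>lborel \<partial>nu) = (\<integral>\<^sup>+y. \<integral>\<^sup>+v. F v y \<partial>nu \<partial>lborel)"
proof -
  interpret nu: prob_space nu by (rule prob_nu)
  interpret pair_sigma_finite nu lborel ..
  show ?thesis by (rule Fubini'[symmetric]) measurable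
qed

lemma swap_mu:
  assumes [measurable]: "(\<lambda>(x, y). F x y) \<in> borel_measurable (borel \<Otimes>\<^sub>M borel)"
  shows "(\<integral>\<^sup>+x. \<integral>\<^sup>+y. F x y \<partial>lborel \<partial>mu) = (\<integral>\<^sup>+y. \<integral>\<^sup>+x. F x y \<partial>mu \<partial>lborel)"
proof -
  interpret mu: prob_space mu by (rule prob_mu)
  interpret pair_sigma_finite mu lborel ..
  show ?thesis by (rule Fubini'[symmetric]) measurable
qed

lemma swap_mu_nu:
  assumes [measurable]: "(\<lambda>(x, v). F x v) \<in> borel_measurable (borel \<Otimes>\<^sub>M borel)"
  shows "(\<integral>\<^sup>+x. \<integral>\<^sup>+v. F x v \<partial>nu \<partial>mu) = (\<integral>\<^sup>+v. \<integral>\<^sup>+x. F x v \<partial>mu \<partial>nu)"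
proof -
  interpret mu: prob_space mu by (rule prob_mu)
  interpret nu: prob_space nu by (rule prob_nu)
  interpret pair_sigma_finite mu nu ..
  show ?thesis by (rule Fubini'[symmetric]) measurable
qed

lemma int_XY:
  assumes h[measurable]: "h \<in> borel_measurable (borel \<Otimes>\<^sub>M borel)"
  shows "(\<integral>\<^sup>+\<omega>. h (X \<omega>, X \<omega> + sqrt (V \<omega>) *\<^sub>R Z \<omega>) \<partial>M)
       = (\<integral>\<^sup>+x. \<integral>\<^sup>+y. h (x, y) * g (y - x) \<partial>lborel \<partial>mu)"
proof -
  have "(\<integral>\<^sup>+\<omega>. h (X \<omega>, X \<omega> + sqrt (V \<omega>) *\<^sub>R Z \<omega>) \<partial>M)
      = (\<integral>\<^sup>+x. \<integral>\<^sup>+v. \<integral>\<^sup>+y. h (x, y) * phi v (y - x) \<partial>lborel \<partial>nu \<partial>mu)"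
    by (rule MF[where H="\<lambda>(x,v,y). h (x, y)", simplified]) measurable
  also have "\<dots> = (\<integral>\<^sup>+x. \<integral>\<^sup>+y. \<integral>\<^sup>+v. h (x, y) * phi v (y - x) \<partial>nu \<partial>lborel \<partial>mu)"
    by (rule nn_integral_cong, rule swap_nu) measurable
  also have "\<dots> = (\<integral>\<^sup>+x. \<integral>\<^sup>+y. h (x, y) * g (y - x) \<partial>lborel \<partial>mu)"
    by (intro nn_integral_cong) (simp add: g_def nn_integral_cmult)
  finally show ?thesis .
qed

lemma int_Y:
  assumes h[measurable]: "h \<in> borel_measurable borel"
  shows "(\<integral>\<^sup>+\<omega>. h (X \<omega> + sqrt (V \<omega>) *\<^sub>R Z \<omega>) \<partial>M) = (\<integral>\<^sup>+y. h y * p y \<partial>lborel)"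
proof -
  have "(\<integral>\<^sup>+\<omega>. h (X \<omega> + sqrt (V \<omega>) *\<^sub>R Z \<omega>) \<partial>M) = (\<integral>\<^sup>+x. \<integral>\<^sup>+y. h y * g (y - x) \<partial>lborel \<partial>mu)"
    by (rule int_XY[where h="\<lambda>(x,y). h y", simplified]) measurable
  also have "\<dots> = (\<integral>\<^sup>+y. \<integral>\<^sup>+x. h y * g (y - x) \<partial>mu \<partial>lborel)"
    by (rule swap_mu) measurable
  also have "\<dots> = (\<integral>\<^sup>+y. h y * p y \<partial>lborel)"
    by (intro nn_integral_cong) (simp add: p_def nn_integral_cmult)
  finally show ?thesis .
qed

lemma int_XYV:
  assumes h[measurable]: "h \<in> borel_measurable (borel \<Otimes>\<^sub>M (borel \<Otimes>\<^sub>M borel))"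
  shows "(\<integral>\<^sup>+\<omega>. h (X \<omega>, X \<omega> + sqrt (V \<omega>) *\<^sub>R Z \<omega>, V \<omega>) \<partial>M)
       = (\<integral>\<^sup>+x. \<integral>\<^sup>+y. \<integral>\<^sup>+v. h (x, y, v) * phi v (y - x) \<partial>nu \<partial>lborel \<partial>mu)"
proof -
  have "(\<integral>\<^sup>+\<omega>. h (X \<omega>, X \<omega> + sqrt (V \<omega>) *\<^sub>R Z \<omega>, V \<omega>) \<partial>M)
      = (\<integral>\<^sup>+x. \<integral>\<^sup>+v. \<integral>\<^sup>+y. h (x, y, v) * phi v (y - x) \<partial>lborel \<partial>nu \<partial>mu)"
    by (rule MF[where H="\<lambda>(x,v,y). h (x, y, v)", simplified]) measurable
  also have "\<dots> = (\<integral>\<^sup>+x. \<integral>\<^sup>+y. \<integral>\<^sup>+v. h (x, y, v) * phi v (y - x) \<partial>nu \<partial>lborel \<partial>mu)"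
    by (rule nn_integral_cong, rule swap_nu) measurable
  finally show ?thesis .
qed

lemma int_YV:
  assumes h[measurable]: "h \<in> borel_measurable (borel \<Otimes>\<^sub>M borel)"
  shows "(\<integral>\<^sup>+\<omega>. h (X \<omega> + sqrt (V \<omega>) *\<^sub>R Z \<omega>, V \<omega>) \<partial>M)
       = (\<integral>\<^sup>+y. \<integral>\<^sup>+v. h (y, v) * q v y \<partial>nu \<partial>lborel)"
proof -
  have "(\<integral>\<^sup>+\<omega>. h (X \<omega> + sqrt (V \<omega>) *\<^sub>R Z \<omega>, V \<omega>) \<partial>M)
      = (\<integral>\<^sup>+x. \<integral>\<^sup>+y. \<integral>\<^sup>+v. h (y, v) * phi v (y - x) \<partial>nu \<partial>lborel \<partial>mu)"
    by (rule int_XYV[where h="\<lambda>(x,y,v). h (y, v)", simplified]) measurable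
  also have "\<dots> = (\<integral>\<^sup>+y. \<integral>\<^sup>+x. \<integral>\<^sup>+v. h (y, v) * phi v (y - x) \<partial>nu \<partial>mu \<partial>lborel)"
  proof (rule swap_mu)
    interpret nu: prob_space nu by (rule prob_nu)
    have "(\<lambda>w. \<integral>\<^sup>+v. h (snd w, v) * phi v (snd w - fst w) \<partial>nu) \<in> borel_measurable (borel \<Otimes>\<^sub>M borel)"
      by (rule nu.borel_measurable_nn_integral) measurable
    then show "(\<lambda>(x, y). \<integral>\<^sup>+v. h (y, v) * phi v (y - x) \<partial>nu) \<in> borel_measurable (borel \<Otimes>\<^sub>M borel)"
      by (simp add: case_prod_beta')
  qed
  also have "\<dots> = (\<integral>\<^sup>+y. \<integral>\<^sup>+v. \<integral>\<^sup>+x. h (y, v) * phi v (y - x) \<partial>mu \<partial>nu \<partial>lborel)"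
    by (rule nn_integral_cong, rule swap_mu_nu) measurable
  also have "\<dots> = (\<integral>\<^sup>+y. \<integral>\<^sup>+v. h (y, v) * q v y \<partial>nu \<partial>lborel)"
    by (intro nn_integral_cong) (simp add: q_def nn_integral_cmult)
  finally show ?thesis .
qed

lemma int_VN:
  assumes h[measurable]: "h \<in> borel_measurable (borel \<Otimes>\<^sub>M borel)"
  shows "(\<integral>\<^sup>+\<omega>. h (V \<omega>, sqrt (V \<omega>) *\<^sub>R Z \<omega>) \<partial>M)
       = (\<integral>\<^sup>+v. \<integral>\<^sup>+n. h (v, n) * phi v n \<partial>lborel \<partial>nu)"
proof -
  interpret mu: prob_space mu by (rule prob_mu)
  have "(\<integral>\<^sup>+\<omega>. h (V \<omega>, sqrt (V \<omega>) *\<^sub>R Z \<omega>) \<partial>M)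
      = (\<integral>\<^sup>+x. \<integral>\<^sup>+v. \<integral>\<^sup>+z. h (v, sqrt v *\<^sub>R z) \<partial>gam \<partial>nu \<partial>mu)"
  proof -
    have m: "(\<lambda>(x::real^'p,v,z). h (v, sqrt v *\<^sub>R z)) \<in> borel_measurable (borel \<Otimes>\<^sub>M (borel \<Otimes>\<^sub>M borel))"
      by measurable
    show ?thesis using MF0[OF m] by (simp only: case_prod_conv)
  qed
  also have "\<dots> = (\<integral>\<^sup>+x. \<integral>\<^sup>+v. \<integral>\<^sup>+n. h (v, n) * phi v n \<partial>lborel \<partial>nu \<partial>mu)"
  proof (rule nn_integral_cong, rule nn_integral_cong_AE)
    fix x :: "real^'p"
    show "AE v in nu. (\<integral>\<^sup>+z. h (v, sqrt v *\<^sub>R z) \<partial>gam) = (\<integral>\<^sup>+n. h (v, n) * phi v n \<partial>lborel)"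
      using AEnu
    proof (rule eventually_mono)
      fix v :: real assume "v > 0"
      then show "(\<integral>\<^sup>+z. h (v, sqrt v *\<^sub>R z) \<partial>gam) = (\<integral>\<^sup>+n. h (v, n) * phi v n \<partial>lborel)"
        unfolding gam_eq using gauss_kernel[of "\<lambda>n. h (v, n)" v 0] by simp
    qed
  qed
  also have "\<dots> = (\<integral>\<^sup>+v. \<integral>\<^sup>+n. h (v, n) * phi v n \<partial>lborel \<partial>nu)"
  proof -
    have "emeasure mu UNIV = 1" using mu.emeasure_space_1 by simp
    then show ?thesis by simp
  qed
  finally show ?thesis .
qed

lemma int_N:
  assumes h[measurable]: "h \<in> borel_measurable borel"
  shows "(\<integral>\<^sup>+\<omega>. h (sqrt (V \<omega>) *\<^sub>R Z \<omega>) \<partial>M) = (\<integral>\<^sup>+n. h n * g n \<partial>lborel)"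
proof -
  have "(\<integral>\<^sup>+\<omega>. h (sqrt (V \<omega>) *\<^sub>R Z \<omega>) \<partial>M) = (\<integral>\<^sup>+v. \<integral>\<^sup>+n. h n * phi v n \<partial>lborel \<partial>nu)"
    by (rule int_VN[where h="\<lambda>(v,n). h n", simplified]) measurable
  also have "\<dots> = (\<integral>\<^sup>+n. \<integral>\<^sup>+v. h n * phi v n \<partial>nu \<partial>lborel)"
    by (rule swap_nu) measurable
  also have "\<dots> = (\<integral>\<^sup>+n. h n * g n \<partial>lborel)"
    by (intro nn_integral_cong) (simp add: g_def nn_integral_cmult)
  finally show ?thesis .
qed

end



lemma distr_densityI:
  assumes F[measurable]: "F \<in> measurable M N" and sR: "sets R = sets N" and f: "f \<in> borel_measurable R"
    and eq: "\<And>A. A \<in> sets N \<Longrightarrow> (\<integral>\<^sup>+\<omega>. indicator A (F \<omega>) \<partial>M) = (\<integral>\<^sup>+z. f z * indicator A z \<partial>R)"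
  shows "distr M N F = density R f"
proof (rule measure_eqI)
  show "sets (distr M N F) = sets (density R f)" using sR by simp
  fix A assume "A \<in> sets (distr M N F)"
  then have A[measurable]: "A \<in> sets N" by simp
  have "emeasure (distr M N F) A = integral\<^sup>N (distr M N F) (indicator A)"
    by simp
  also have "\<dots> = (\<integral>\<^sup>+\<omega>. indicator A (F \<omega>) \<partial>M)"
    by (rule nn_integral_distr) simp_all
  also have "\<dots> = (\<integral>\<^sup>+z. f z * indicator A z \<partial>R)" by (rule eq[OF A])
  also have "\<dots> = emeasure (density R f) A"
    using A sR f by (simp add: emeasure_density)
  finally show "emeasure (distr M N F) A = emeasure (density R f) A" .
qed

context L5 begin

abbreviation "Yv \<omega> \<equiv> X \<omega> + sqrt (V \<omega>) *\<^sub>R Z \<omega>"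
abbreviation "Nv \<omega> \<equiv> sqrt (V \<omega>) *\<^sub>R Z \<omega>"

lemma law_XY: "distr M (borel \<Otimes>\<^sub>M borel) (\<lambda>\<omega>. (X \<omega>, Yv \<omega>)) = density (mu \<Otimes>\<^sub>M lborel) (\<lambda>(x,y). g (y - x))"
proof (rule distr_densityI)
  show "(\<lambda>\<omega>. (X \<omega>, Yv \<omega>)) \<in> M \<rightarrow>\<^sub>M borel \<Otimes>\<^sub>M borel" by measurable
  show "sets (mu \<Otimes>\<^sub>M lborel) = sets (borel \<Otimes>\<^sub>M borel)" by (simp cong: sets_pair_measure_cong)
  show "(\<lambda>(x, y). g (y - x)) \<in> borel_measurable (mu \<Otimes>\<^sub>M lborel)" by measurable
  fix A :: "((real^'p) \<times> (real^'p)) set" assume A[measurable]: "A \<in> sets (borel \<Otimes>\<^sub>M borel)"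
  have "(\<integral>\<^sup>+\<omega>. indicator A (X \<omega>, Yv \<omega>) \<partial>M) = (\<integral>\<^sup>+x. \<integral>\<^sup>+y. indicator A (x, y) * g (y - x) \<partial>lborel \<partial>mu)"
    by (rule int_XY) measurable
  also have "\<dots> = (\<integral>\<^sup>+z. (\<lambda>(x, y). g (y - x)) z * indicator A z \<partial>(mu \<Otimes>\<^sub>M lborel))"
    by (subst lborel.nn_integral_fst[symmetric]) (auto simp: mult.commute)
  finally show "(\<integral>\<^sup>+\<omega>. indicator A (X \<omega>, Yv \<omega>) \<partial>M) = (\<integral>\<^sup>+z. (\<lambda>(x, y). g (y - x)) z * indicator A z \<partial>(mu \<Otimes>\<^sub>M lborel))" .
qed

lemma sf_nu: "sigma_finite_measure nu"
proof -
  interpret nu: prob_space nu by (rule prob_nu)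
  show ?thesis ..
qed

lemma sf_mu: "sigma_finite_measure mu"
proof -
  interpret mu: prob_space mu by (rule prob_mu)
  show ?thesis ..
qed

lemma law_Y: "distr M borel Yv = density lborel p"
proof (rule distr_densityI)
  show "Yv \<in> M \<rightarrow>\<^sub>M borel" by measurable
  show "sets lborel = sets (borel :: (real^'p) measure)" by simp
  show "p \<in> borel_measurable lborel" by measurable
  fix A :: "(real^'p) set" assume A[measurable]: "A \<in> sets borel"
  show "(\<integral>\<^sup>+\<omega>. indicator A (Yv \<omega>) \<partial>M) = (\<integral>\<^sup>+z. p z * indicator A z \<partial>lborel)"
    by (subst int_Y) (auto simp: mult.commute)
qed

lemma law_N: "distr M borel Nv = density lborel g"
proof (rule distr_densityI)
  show "Nv \<in> M \<rightarrow>\<^sub>M borel" by measurable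
  show "sets lborel = sets (borel :: (real^'p) measure)" by simp
  show "g \<in> borel_measurable lborel" by measurable
  fix A :: "(real^'p) set" assume A[measurable]: "A \<in> sets borel"
  show "(\<integral>\<^sup>+\<omega>. indicator A (Nv \<omega>) \<partial>M) = (\<integral>\<^sup>+z. g z * indicator A z \<partial>lborel)"
    by (subst int_N) (auto simp: mult.commute)
qed

lemma law_YV: "distr M (borel \<Otimes>\<^sub>M borel) (\<lambda>\<omega>. (Yv \<omega>, V \<omega>)) = density (lborel \<Otimes>\<^sub>M nu) (\<lambda>(y,v). q v y)"
proof (rule distr_densityI)
  interpret nu: sigma_finite_measure nu by (rule sf_nu)
  show "(\<lambda>\<omega>. (Yv \<omega>, V \<omega>)) \<in> M \<rightarrow>\<^sub>M borel \<Otimes>\<^sub>M borel" by measurable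
  show "sets (lborel \<Otimes>\<^sub>M nu) = sets (borel \<Otimes>\<^sub>M borel)" by (simp cong: sets_pair_measure_cong)
  show "(\<lambda>(y, v). q v y) \<in> borel_measurable (lborel \<Otimes>\<^sub>M nu)" by measurable
  fix A :: "((real^'p) \<times> real) set" assume A[measurable]: "A \<in> sets (borel \<Otimes>\<^sub>M borel)"
  have "(\<integral>\<^sup>+\<omega>. indicator A (Yv \<omega>, V \<omega>) \<partial>M) = (\<integral>\<^sup>+y. \<integral>\<^sup>+v. indicator A (y, v) * q v y \<partial>nu \<partial>lborel)"
    by (rule int_YV) measurable
  also have "\<dots> = (\<integral>\<^sup>+z. (\<lambda>(y, v). q v y) z * indicator A z \<partial>(lborel \<Otimes>\<^sub>M nu))"
    by (subst nu.nn_integral_fst[symmetric]) (auto simp: mult.commute)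
  finally show "(\<integral>\<^sup>+\<omega>. indicator A (Yv \<omega>, V \<omega>) \<partial>M) = (\<integral>\<^sup>+z. (\<lambda>(y, v). q v y) z * indicator A z \<partial>(lborel \<Otimes>\<^sub>M nu))" .
qed

lemma law_XYV: "distr M (borel \<Otimes>\<^sub>M (borel \<Otimes>\<^sub>M borel)) (\<lambda>\<omega>. (X \<omega>, (Yv \<omega>, V \<omega>)))
   = density (mu \<Otimes>\<^sub>M (lborel \<Otimes>\<^sub>M nu)) (\<lambda>(x,(y,v)). phi v (y - x))"
proof (rule distr_densityI)
  interpret nu: sigma_finite_measure nu by (rule sf_nu)
  interpret LN: sigma_finite_measure "lborel \<Otimes>\<^sub>M nu"
    by (intro sigma_finite_pair_measure sf_nu lborel.sigma_finite_measure_axioms)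
  show "(\<lambda>\<omega>. (X \<omega>, (Yv \<omega>, V \<omega>))) \<in> M \<rightarrow>\<^sub>M borel \<Otimes>\<^sub>M (borel \<Otimes>\<^sub>M borel)" by measurable
  show "sets (mu \<Otimes>\<^sub>M (lborel \<Otimes>\<^sub>M nu)) = sets (borel \<Otimes>\<^sub>M (borel \<Otimes>\<^sub>M borel))" by (simp cong: sets_pair_measure_cong)
  show "(\<lambda>(x,(y, v)). phi v (y - x)) \<in> borel_measurable (mu \<Otimes>\<^sub>M (lborel \<Otimes>\<^sub>M nu))" by measurable
  fix A :: "((real^'p) \<times> (real^'p) \<times> real) set" assume A[measurable]: "A \<in> sets (borel \<Otimes>\<^sub>M (borel \<Otimes>\<^sub>M borel))"
  have "(\<integral>\<^sup>+\<omega>. indicator A (X \<omega>, Yv \<omega>, V \<omega>) \<partial>M) = (\<integral>\<^sup>+x. \<integral>\<^sup>+y. \<integral>\<^sup>+v. indicator A (x, y, v) * phi v (y - x) \<partial>nu \<partial>lborel \<partial>mu)"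
    by (rule int_XYV) measurable
  also have "\<dots> = (\<integral>\<^sup>+x. \<integral>\<^sup>+w. indicator A (x, w) * (\<lambda>(y, v). phi v (y - x)) w \<partial>(lborel \<Otimes>\<^sub>M nu) \<partial>mu)"
    by (rule nn_integral_cong, subst nu.nn_integral_fst[symmetric]) auto
  also have "\<dots> = (\<integral>\<^sup>+z. (\<lambda>(x,(y, v)). phi v (y - x)) z * indicator A z \<partial>(mu \<Otimes>\<^sub>M (lborel \<Otimes>\<^sub>M nu)))"
    by (subst LN.nn_integral_fst[symmetric]) (auto simp: mult.commute split_beta')
  finally show "(\<integral>\<^sup>+\<omega>. indicator A (X \<omega>, Yv \<omega>, V \<omega>) \<partial>M) = (\<integral>\<^sup>+z. (\<lambda>(x,(y, v)). phi v (y - x)) z * indicator A z \<partial>(mu \<Otimes>\<^sub>M (lborel \<Otimes>\<^sub>M nu)))" .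
qed

lemma law_VN: "distr M (borel \<Otimes>\<^sub>M borel) (\<lambda>\<omega>. (V \<omega>, Nv \<omega>)) = density (nu \<Otimes>\<^sub>M lborel) (\<lambda>(v,n). phi v n)"
proof (rule distr_densityI)
  show "(\<lambda>\<omega>. (V \<omega>, Nv \<omega>)) \<in> M \<rightarrow>\<^sub>M borel \<Otimes>\<^sub>M borel" by measurable
  show "sets (nu \<Otimes>\<^sub>M lborel) = sets (borel \<Otimes>\<^sub>M borel)" by (simp cong: sets_pair_measure_cong)
  show "(\<lambda>(v, n). phi v n) \<in> borel_measurable (nu \<Otimes>\<^sub>M lborel)" by measurable
  fix A :: "(real \<times> (real^'p)) set" assume A[measurable]: "A \<in> sets (borel \<Otimes>\<^sub>M borel)"
  have "(\<integral>\<^sup>+\<omega>. indicator A (V \<omega>, Nv \<omega>) \<partial>M) = (\<integral>\<^sup>+v. \<integral>\<^sup>+n. indicator A (v, n) * phi v n \<partial>lborel \<partial>nu)"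
    by (rule int_VN) measurable
  also have "\<dots> = (\<integral>\<^sup>+z. (\<lambda>(v, n). phi v n) z * indicator A z \<partial>(nu \<Otimes>\<^sub>M lborel))"
    by (subst lborel.nn_integral_fst[symmetric]) (auto simp: mult.commute)
  finally show "(\<integral>\<^sup>+\<omega>. indicator A (V \<omega>, Nv \<omega>) \<partial>M) = (\<integral>\<^sup>+z. (\<lambda>(v, n). phi v n) z * indicator A z \<partial>(nu \<Otimes>\<^sub>M lborel))" .
qed

end



lemma phi_pos: "v > 0 \<Longrightarrow> phi v n > 0"
  by (simp add: phi_def)

lemma phi_bound: "v > 0 \<Longrightarrow> phi v n \<le> ennreal ((2 * pi * v) powr (- real CARD('p) / 2))"
  for n :: "real^'p"
  unfolding phi_def
  by (intro ennreal_leI mult_left_le) auto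

context L5 begin

lemma g_pos: "g n > 0"
proof (rule ccontr)
  interpret nu: prob_space nu by (rule prob_nu)
  assume "\<not> g n > 0"
  then have "g n = 0" by (simp add: not_less)
  then have "AE v in nu. phi v n = 0" unfolding g_def
    by (subst (asm) nn_integral_0_iff_AE) measurable
  with AEnu have "AE v in nu. False"
    by eventually_elim (metis order_less_irrefl phi_pos)
  then show False by simp
qed

lemma p_pos: "p y > 0"
proof (rule ccontr)
  interpret mu: prob_space mu by (rule prob_mu)
  assume "\<not> p y > 0"
  then have "p y = 0" by (simp add: not_less)
  then have "AE x in mu. g (y - x) = 0" unfolding p_def
    by (subst (asm) nn_integral_0_iff_AE) measurable
  then have "AE x in mu. False"
    by eventually_elim (metis order_less_irrefl g_pos)
  then show False by simp
qed

lemma q_pos: "v > 0 \<Longrightarrow> q v y > 0"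
proof (rule ccontr)
  interpret mu: prob_space mu by (rule prob_mu)
  assume v: "v > 0" and "\<not> q v y > 0"
  then have "q v y = 0" by (simp add: not_less)
  then have "AE x in mu. phi v (y - x) = 0" unfolding q_def
    by (subst (asm) nn_integral_0_iff_AE) measurable
  then have "AE x in mu. False"
    by eventually_elim (metis order_less_irrefl phi_pos v)
  then show False by simp
qed

lemma q_fin: "v > 0 \<Longrightarrow> q v y < \<infinity>"
proof -
  interpret mu: prob_space mu by (rule prob_mu)
  assume v: "v > 0"
  have "q v y \<le> (\<integral>\<^sup>+x. ennreal ((2 * pi * v) powr (- real CARD('p) / 2)) \<partial>mu)"
    unfolding q_def by (intro nn_integral_mono phi_bound v)
  also have "\<dots> = ennreal ((2 * pi * v) powr (- real CARD('p) / 2))"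
    using mu.emeasure_space_1 by simp
  finally show ?thesis by (simp add: le_less_trans top.not_eq_extremum)
qed

lemma int_p: "(\<integral>\<^sup>+y. p y \<partial>lborel) = 1"
proof -
  interpret D: prob_space "distr M borel Yv" by (rule prob_space_distr) simp
  have "emeasure (distr M borel Yv) UNIV = 1" using D.emeasure_space_1 by simp
  then show ?thesis unfolding law_Y by (simp add: emeasure_density)
qed

lemma int_g: "(\<integral>\<^sup>+y. g (y::real^'p) \<partial>lborel) = 1"
proof -
  interpret D: prob_space "distr M borel Nv" by (rule prob_space_distr) simp
  have "emeasure (distr M borel Nv) UNIV = 1" using D.emeasure_space_1 by simp
  then show ?thesis unfolding law_N by (simp add: emeasure_density)
qed

lemma AE_p_fin: "AE y in lborel. p y \<noteq> \<infinity>"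
  by (rule nn_integral_PInf_AE) (simp_all add: int_p)

lemma AE_g_fin: "AE y in lborel. g (y::real^'p) \<noteq> \<infinity>"
  by (rule nn_integral_PInf_AE) (simp_all add: int_g)

lemma AEM_p: "AE \<omega> in M. p (Yv \<omega>) \<noteq> \<infinity>"
proof -
  have "AE y in density lborel p. p y \<noteq> \<infinity>"
    by (subst AE_density) (auto intro: eventually_mono[OF AE_p_fin])
  then have "AE y in distr M borel Yv. p y \<noteq> \<infinity>" by (simp only: law_Y)
  then show ?thesis by (subst (asm) AE_distr_iff) simp_all
qed

lemma AEM_g: "AE \<omega> in M. g (Nv \<omega>) \<noteq> \<infinity>"
proof -
  have "AE y in density lborel g. g (y::real^'p) \<noteq> \<infinity>"
    by (subst AE_density) (auto intro: eventually_mono[OF AE_g_fin])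
  then have "AE y in distr M borel Nv. g y \<noteq> \<infinity>" by (simp only: law_N)
  then show ?thesis by (subst (asm) AE_distr_iff) simp_all
qed

end



context L5 begin

lemma sfd: "prob_space (distr M N F) \<Longrightarrow> sigma_finite_measure (distr M N F)"
  by (rule prob_space_imp_sigma_finite)

lemma P_XY: "mu \<Otimes>\<^sub>M distr M borel Yv = density (mu \<Otimes>\<^sub>M lborel) (\<lambda>(x,y). p y)"
proof -
  have sf: "sigma_finite_measure (density lborel p)"
    unfolding law_Y[symmetric] by (intro prob_space_imp_sigma_finite prob_space_distr) simp
  have "mu \<Otimes>\<^sub>M distr M borel Yv = density mu (\<lambda>_. 1) \<Otimes>\<^sub>M density lborel p" by (simp add: density_1 law_Y)
  also have "\<dots> = density (mu \<Otimes>\<^sub>M lborel) (\<lambda>(x,y). 1 * p y)"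
    by (rule pair_measure_density) (auto intro: lborel.sigma_finite_measure_axioms sf)
  finally show ?thesis by simp
qed

lemma P_VN: "nu \<Otimes>\<^sub>M distr M borel Nv = density (nu \<Otimes>\<^sub>M lborel) (\<lambda>(v,n). g n)"
proof -
  have sf: "sigma_finite_measure (density lborel (g :: real^'p \<Rightarrow> ennreal))"
    unfolding law_N[symmetric] by (intro prob_space_imp_sigma_finite prob_space_distr) simp
  have "nu \<Otimes>\<^sub>M distr M borel Nv = density nu (\<lambda>_. 1) \<Otimes>\<^sub>M density lborel g" by (simp add: density_1 law_N)
  also have "\<dots> = density (nu \<Otimes>\<^sub>M lborel) (\<lambda>(v,n). 1 * g n)"
    by (rule pair_measure_density) (auto intro: lborel.sigma_finite_measure_axioms sf)
  finally show ?thesis by simp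
qed

lemma P_XYV: "mu \<Otimes>\<^sub>M distr M (borel \<Otimes>\<^sub>M borel) (\<lambda>\<omega>. (Yv \<omega>, V \<omega>))
    = density (mu \<Otimes>\<^sub>M (lborel \<Otimes>\<^sub>M nu)) (\<lambda>(x,(y,v)). q v y)"
proof -
  have sf: "sigma_finite_measure (density (lborel \<Otimes>\<^sub>M nu) (\<lambda>(y,v). q v y))"
    unfolding law_YV[symmetric] by (intro prob_space_imp_sigma_finite prob_space_distr) simp
  have sf2: "sigma_finite_measure (lborel \<Otimes>\<^sub>M nu)"
    by (intro sigma_finite_pair_measure sf_nu lborel.sigma_finite_measure_axioms)
  have "mu \<Otimes>\<^sub>M distr M (borel \<Otimes>\<^sub>M borel) (\<lambda>\<omega>. (Yv \<omega>, V \<omega>))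
      = density mu (\<lambda>_. 1) \<Otimes>\<^sub>M density (lborel \<Otimes>\<^sub>M nu) (\<lambda>(y,v). q v y)" by (simp add: density_1 law_YV)
  also have "\<dots> = density (mu \<Otimes>\<^sub>M (lborel \<Otimes>\<^sub>M nu)) (\<lambda>(x,w). 1 * (\<lambda>(y,v). q v y) w)"
    by (rule pair_measure_density) (auto intro: sf sf2)
  finally show ?thesis by (simp add: split_beta')
qed

lemma P_Ynu: "distr M borel Yv \<Otimes>\<^sub>M nu = density (lborel \<Otimes>\<^sub>M nu) (\<lambda>(y,v). p y)"
proof -
  have "distr M borel Yv \<Otimes>\<^sub>M nu = density lborel p \<Otimes>\<^sub>M density nu (\<lambda>_. 1)" by (simp add: density_1 law_Y)
  also have "\<dots> = density (lborel \<Otimes>\<^sub>M nu) (\<lambda>(y,v). p y * 1)"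
    by (rule pair_measure_density) (auto simp: density_1 intro: sf_nu)
  finally show ?thesis by simp
qed

lemma AE_R2: "AE z in mu \<Otimes>\<^sub>M (lborel \<Otimes>\<^sub>M nu). snd (snd z) > 0"
proof -
  interpret mu: sigma_finite_measure mu by (rule sf_mu)
  interpret nu: sigma_finite_measure nu by (rule sf_nu)
  interpret LN: sigma_finite_measure "lborel \<Otimes>\<^sub>M nu"
    by (intro sigma_finite_pair_measure sf_nu lborel.sigma_finite_measure_axioms)
  interpret P1: pair_sigma_finite lborel nu ..
  interpret P2: pair_sigma_finite mu "lborel \<Otimes>\<^sub>M nu" ..
  have 1: "AE w in lborel \<Otimes>\<^sub>M nu. snd w > 0"
    apply (rule P1.AE_pair_measure)
     apply measurable
    apply (rule AE_I2)
    apply (simp add: AEnu)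
    done
  show ?thesis
    apply (rule P2.AE_pair_measure)
     apply measurable
    apply (rule AE_I2)
    apply (simp add: 1)
    done
qed

lemma MI_XY: "MI M borel borel X Yv =
   (if integrable M (\<lambda>\<omega>. ln (enn2real (g (Nv \<omega>) / p (Yv \<omega>))))
    then ereal (\<integral>\<omega>. ln (enn2real (g (Nv \<omega>) / p (Yv \<omega>))) \<partial>M) else \<infinity>)"
proof -
  interpret mu: sigma_finite_measure mu by (rule sf_mu)
  interpret P: pair_sigma_finite mu lborel ..
  have "MI M borel borel X Yv =
   (if integrable M (\<lambda>\<omega>. ln (enn2real ((\<lambda>(x,y). g (y - x)) (X \<omega>, Yv \<omega>) / (\<lambda>(x,y). p y) (X \<omega>, Yv \<omega>))))
    then ereal (\<integral>\<omega>. ln (enn2real ((\<lambda>(x,y). g (y - x)) (X \<omega>, Yv \<omega>) / (\<lambda>(x,y). p y) (X \<omega>, Yv \<omega>))) \<partial>M) else \<infinity>)"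
  proof (rule MI_density[OF prob])
    show "sets (mu \<Otimes>\<^sub>M lborel) = sets (borel \<Otimes>\<^sub>M borel)" by (simp cong: sets_pair_measure_cong)
    show "(\<lambda>(x, y). g (y - x)) \<in> borel_measurable (mu \<Otimes>\<^sub>M lborel)" by measurable
    show "(\<lambda>(x, y). p y) \<in> borel_measurable (mu \<Otimes>\<^sub>M lborel)" by measurable
    show "mu \<Otimes>\<^sub>M distr M borel Yv = density (mu \<Otimes>\<^sub>M lborel) (\<lambda>(x, y). p y)" by (rule P_XY)
    show "distr M (borel \<Otimes>\<^sub>M borel) (\<lambda>\<omega>. (X \<omega>, Yv \<omega>)) = density (mu \<Otimes>\<^sub>M lborel) (\<lambda>(x, y). g (y - x))"
      by (rule law_XY)
    have "AE z in mu \<Otimes>\<^sub>M lborel. p (snd z) < \<top>"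
      apply (rule P.AE_pair_measure)
       apply measurable
      apply (rule AE_I2)
      using AE_p_fin apply (simp add: less_top)
      done
    then show "AE z in mu \<Otimes>\<^sub>M lborel. (\<lambda>(x, y). p y) z \<noteq> \<infinity>"
      by eventually_elim (auto split: prod.splits)
    show "AE z in mu \<Otimes>\<^sub>M lborel. (\<lambda>(x, y). p y) z > 0"
      by (intro AE_I2) (auto simp: p_pos split: prod.split)
  qed measurable
  then show ?thesis by simp
qed

lemma MI_VN: "MI M borel borel V Nv =
   (if integrable M (\<lambda>\<omega>. ln (enn2real (phi (V \<omega>) (Nv \<omega>) / g (Nv \<omega>))))
    then ereal (\<integral>\<omega>. ln (enn2real (phi (V \<omega>) (Nv \<omega>) / g (Nv \<omega>))) \<partial>M) else \<infinity>)"
proof -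
  interpret nu: sigma_finite_measure nu by (rule sf_nu)
  interpret P: pair_sigma_finite nu lborel ..
  have "MI M borel borel V Nv =
   (if integrable M (\<lambda>\<omega>. ln (enn2real ((\<lambda>(v,n). phi v n) (V \<omega>, Nv \<omega>) / (\<lambda>(v,n). g n) (V \<omega>, Nv \<omega>))))
    then ereal (\<integral>\<omega>. ln (enn2real ((\<lambda>(v,n). phi v n) (V \<omega>, Nv \<omega>) / (\<lambda>(v,n). g n) (V \<omega>, Nv \<omega>))) \<partial>M) else \<infinity>)"
  proof (rule MI_density[OF prob])
    show "sets (nu \<Otimes>\<^sub>M lborel) = sets (borel \<Otimes>\<^sub>M borel)" by (simp cong: sets_pair_measure_cong)
    show "(\<lambda>(v, n). phi v n) \<in> borel_measurable (nu \<Otimes>\<^sub>M lborel)" by measurable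
    show "(\<lambda>(v, n). g n) \<in> borel_measurable (nu \<Otimes>\<^sub>M lborel)" by measurable
    show "nu \<Otimes>\<^sub>M distr M borel Nv = density (nu \<Otimes>\<^sub>M lborel) (\<lambda>(v, n). g n)" by (rule P_VN)
    show "distr M (borel \<Otimes>\<^sub>M borel) (\<lambda>\<omega>. (V \<omega>, Nv \<omega>)) = density (nu \<Otimes>\<^sub>M lborel) (\<lambda>(v, n). phi v n)"
      by (rule law_VN)
    have "AE z in nu \<Otimes>\<^sub>M lborel. g (snd z :: real^'p) < \<top>"
      apply (rule P.AE_pair_measure)
       apply measurable
      apply (rule AE_I2)
      using AE_g_fin apply (simp add: less_top)
      done
    then show "AE z in nu \<Otimes>\<^sub>M lborel. (\<lambda>(v, n). g n) z \<noteq> \<infinity>"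
      by eventually_elim (auto split: prod.splits)
    show "AE z in nu \<Otimes>\<^sub>M lborel. (\<lambda>(v, n). g n) z > 0"
      by (intro AE_I2) (auto simp: g_pos split: prod.split)
  qed measurable
  then show ?thesis by simp
qed

lemma MI_XYV: "MI M borel (borel \<Otimes>\<^sub>M borel) X (\<lambda>\<omega>. (Yv \<omega>, V \<omega>)) =
   (if integrable M (\<lambda>\<omega>. ln (enn2real (phi (V \<omega>) (Nv \<omega>) / q (V \<omega>) (Yv \<omega>))))
    then ereal (\<integral>\<omega>. ln (enn2real (phi (V \<omega>) (Nv \<omega>) / q (V \<omega>) (Yv \<omega>))) \<partial>M) else \<infinity>)"
proof -
  have "MI M borel (borel \<Otimes>\<^sub>M borel) X (\<lambda>\<omega>. (Yv \<omega>, V \<omega>)) =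
   (if integrable M (\<lambda>\<omega>. ln (enn2real ((\<lambda>(x,(y,v)). phi v (y - x)) (X \<omega>, (Yv \<omega>, V \<omega>)) / (\<lambda>(x,(y,v)). q v y) (X \<omega>, (Yv \<omega>, V \<omega>)))))
    then ereal (\<integral>\<omega>. ln (enn2real ((\<lambda>(x,(y,v)). phi v (y - x)) (X \<omega>, (Yv \<omega>, V \<omega>)) / (\<lambda>(x,(y,v)). q v y) (X \<omega>, (Yv \<omega>, V \<omega>)))) \<partial>M) else \<infinity>)"
  proof (rule MI_density[OF prob])
    show "sets (mu \<Otimes>\<^sub>M (lborel \<Otimes>\<^sub>M nu)) = sets (borel \<Otimes>\<^sub>M (borel \<Otimes>\<^sub>M borel))" by (simp cong: sets_pair_measure_cong)
    show "(\<lambda>(x,(y,v)). phi v (y - x)) \<in> borel_measurable (mu \<Otimes>\<^sub>M (lborel \<Otimes>\<^sub>M nu))" by measurable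
    show "(\<lambda>(x,(y,v)). q v y) \<in> borel_measurable (mu \<Otimes>\<^sub>M (lborel \<Otimes>\<^sub>M nu))" by measurable
    show "mu \<Otimes>\<^sub>M distr M (borel \<Otimes>\<^sub>M borel) (\<lambda>\<omega>. (Yv \<omega>, V \<omega>)) = density (mu \<Otimes>\<^sub>M (lborel \<Otimes>\<^sub>M nu)) (\<lambda>(x,(y,v)). q v y)"
      by (rule P_XYV)
    show "distr M (borel \<Otimes>\<^sub>M (borel \<Otimes>\<^sub>M borel)) (\<lambda>\<omega>. (X \<omega>, (Yv \<omega>, V \<omega>))) = density (mu \<Otimes>\<^sub>M (lborel \<Otimes>\<^sub>M nu)) (\<lambda>(x,(y,v)). phi v (y - x))"
      by (rule law_XYV)
    show "AE z in mu \<Otimes>\<^sub>M (lborel \<Otimes>\<^sub>M nu). (\<lambda>(x,(y,v)). q v y) z \<noteq> \<infinity>"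
      using AE_R2 by eventually_elim (auto simp: q_fin[THEN less_imp_neq, unfolded infinity_ennreal_def] split: prod.splits)
    show "AE z in mu \<Otimes>\<^sub>M (lborel \<Otimes>\<^sub>M nu). (\<lambda>(x,(y,v)). q v y) z > 0"
      using AE_R2 by eventually_elim (auto dest: q_pos split: prod.splits)
  qed measurable
  then show ?thesis by simp
qed

lemma MI_XV: "MI M borel borel X V = 0"
proof -
  have "MI M borel borel X V =
   (if integrable M (\<lambda>\<omega>. ln (enn2real ((\<lambda>_. 1::ennreal) (X \<omega>, V \<omega>) / (\<lambda>_. 1) (X \<omega>, V \<omega>))))
    then ereal (\<integral>\<omega>. ln (enn2real ((\<lambda>_. 1::ennreal) (X \<omega>, V \<omega>) / (\<lambda>_. 1) (X \<omega>, V \<omega>))) \<partial>M) else \<infinity>)"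
  proof (rule MI_density[OF prob])
    show "sets (mu \<Otimes>\<^sub>M nu) = sets (borel \<Otimes>\<^sub>M borel)" by (simp cong: sets_pair_measure_cong)
    show "mu \<Otimes>\<^sub>M nu = density (mu \<Otimes>\<^sub>M nu) (\<lambda>_. 1)" by (simp add: density_1)
    show "distr M (borel \<Otimes>\<^sub>M borel) (\<lambda>\<omega>. (X \<omega>, V \<omega>)) = density (mu \<Otimes>\<^sub>M nu) (\<lambda>_. 1)"
      by (simp add: density_1 XV)
  qed auto
  then show ?thesis by (simp add: zero_ereal_def)
qed

end



lemma nn_le1_integrable:
  fixes f :: "'a \<Rightarrow> real"
  assumes f[measurable]: "f \<in> borel_measurable M" and nn: "\<And>x. 0 \<le> f x"
    and le: "(\<integral>\<^sup>+x. ennreal (f x) \<partial>M) \<le> 1"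
  shows "integrable M f" "integral\<^sup>L M f \<le> 1"
proof -
  show i: "integrable M f"
    by (rule integrableI_nonneg) (use nn le in \<open>auto simp: le_less_trans top.not_eq_extremum\<close>)
  have "ennreal (integral\<^sup>L M f) = (\<integral>\<^sup>+x. ennreal (f x) \<partial>M)"
    by (rule nn_integral_eq_integral[OF i, symmetric]) (simp add: nn)
  with le show "integral\<^sup>L M f \<le> 1" by (metis ennreal_le_1)
qed

lemma AL:
  fixes L1 L2 L3 L4 :: "'a \<Rightarrow> real"
  assumes P: "prob_space M"
    and m[measurable]: "L1 \<in> borel_measurable M" "L2 \<in> borel_measurable M" "L3 \<in> borel_measurable M" "L4 \<in> borel_measurable M"
    and ident: "AE \<omega> in M. L1 \<omega> = L2 \<omega> + L3 \<omega> - L4 \<omega>"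
    and W: "(\<integral>\<^sup>+\<omega>. ennreal (exp (L2 \<omega> - L1 \<omega>)) \<partial>M) \<le> 1"
    and A1: "(\<integral>\<^sup>+\<omega>. ennreal (exp (- L1 \<omega>)) \<partial>M) \<le> 1"
    and A2: "(\<integral>\<^sup>+\<omega>. ennreal (exp (- L2 \<omega>)) \<partial>M) \<le> 1"
    and A4: "(\<integral>\<^sup>+\<omega>. ennreal (exp (- L4 \<omega>)) \<partial>M) \<le> 1"
  shows "(if integrable M L2 then ereal (integral\<^sup>L M L2) else \<infinity>) \<le> (if integrable M L1 then ereal (integral\<^sup>L M L1) else \<infinity>)
    \<and> (if integrable M L1 then ereal (integral\<^sup>L M L1) else \<infinity>) \<le>
        (if integrable M L2 then ereal (integral\<^sup>L M L2) else \<infinity>) + (if integrable M L3 then ereal (integral\<^sup>L M L3) else \<infinity>)"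
proof -
  interpret prob_space M by (rule P)
  have iW: "integrable M (\<lambda>\<omega>. exp (L2 \<omega> - L1 \<omega>))" and IW: "(\<integral>\<omega>. exp (L2 \<omega> - L1 \<omega>) \<partial>M) \<le> 1"
    using nn_le1_integrable[OF _ _ W] by auto
  have i1: "integrable M (\<lambda>\<omega>. exp (- L1 \<omega>))"
    using nn_le1_integrable[OF _ _ A1] by auto
  have i2: "integrable M (\<lambda>\<omega>. exp (- L2 \<omega>))"
    using nn_le1_integrable[OF _ _ A2] by auto
  have i4: "integrable M (\<lambda>\<omega>. exp (- L4 \<omega>))" and I4: "(\<integral>\<omega>. exp (- L4 \<omega>) \<partial>M) \<le> 1"
    using nn_le1_integrable[OF _ _ A4] by auto
  have ic: "integrable M (\<lambda>\<omega>. c)" for c :: real by simp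
  have Ic: "(\<integral>\<omega>. c \<partial>M) = c" for c :: real by (simp add: prob_space)
  have e: "t \<le> exp t - 1" for t :: real using exp_ge_add_one_self[of t] by linarith
  have lower: "(if integrable M L2 then ereal (integral\<^sup>L M L2) else \<infinity>) \<le> (if integrable M L1 then ereal (integral\<^sup>L M L1) else \<infinity>)"
  proof (cases "integrable M L1")
    case False then show ?thesis by simp
  next
    case True
    have b1: "L2 \<omega> \<le> L1 \<omega> + exp (L2 \<omega> - L1 \<omega>) - 1" for \<omega> using e[of "L2 \<omega> - L1 \<omega>"] by simp
    have b2: "- L2 \<omega> \<le> exp (- L2 \<omega>) - 1" for \<omega> using e[of "- L2 \<omega>"] by simp
    have iL2: "integrable M L2"
    proof (rule Bochner_Integration.integrable_bound)
      show "integrable M (\<lambda>\<omega>. \<bar>L1 \<omega>\<bar> + exp (L2 \<omega> - L1 \<omega>) + exp (- L2 \<omega>))"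
        using True iW i2 by (intro Bochner_Integration.integrable_add Bochner_Integration.integrable_abs) auto
      show "AE \<omega> in M. norm (L2 \<omega>) \<le> norm (\<bar>L1 \<omega>\<bar> + exp (L2 \<omega> - L1 \<omega>) + exp (- L2 \<omega>))"
      proof (intro AE_I2)
        fix \<omega>
        show "norm (L2 \<omega>) \<le> norm (\<bar>L1 \<omega>\<bar> + exp (L2 \<omega> - L1 \<omega>) + exp (- L2 \<omega>))"
          using b1[of \<omega>] b2[of \<omega>] exp_gt_zero[of "L2 \<omega> - L1 \<omega>"] exp_gt_zero[of "- L2 \<omega>"]
          by (simp only: real_norm_def; arith)
      qed
    qed simp
    have "integral\<^sup>L M L2 \<le> (\<integral>\<omega>. L1 \<omega> + exp (L2 \<omega> - L1 \<omega>) - 1 \<partial>M)"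
      using b1 True iW by (intro integral_mono iL2) auto
    also have "\<dots> = integral\<^sup>L M L1 + (\<integral>\<omega>. exp (L2 \<omega> - L1 \<omega>) \<partial>M) - 1"
      using True iW by (simp add: Ic prob_space)
    also have "\<dots> \<le> integral\<^sup>L M L1" using IW by simp
    finally show ?thesis using True iL2 by simp
  qed
  have upper: "(if integrable M L1 then ereal (integral\<^sup>L M L1) else \<infinity>) \<le>
        (if integrable M L2 then ereal (integral\<^sup>L M L2) else \<infinity>) + (if integrable M L3 then ereal (integral\<^sup>L M L3) else \<infinity>)"
  proof (cases "integrable M L2 \<and> integrable M L3")
    case False then show ?thesis by auto
  next
    case True
    then have T2: "integrable M L2" and T3: "integrable M L3" by auto
    have b1: "AE \<omega> in M. L1 \<omega> \<le> L2 \<omega> + L3 \<omega> + exp (- L4 \<omega>) - 1"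
      using ident by eventually_elim (use e in \<open>smt (verit)\<close>)
    have b2: "- L1 \<omega> \<le> exp (- L1 \<omega>) - 1" for \<omega> using e[of "- L1 \<omega>"] by simp
    have iL1: "integrable M L1"
    proof (rule Bochner_Integration.integrable_bound)
      show "integrable M (\<lambda>\<omega>. \<bar>L2 \<omega>\<bar> + \<bar>L3 \<omega>\<bar> + exp (- L4 \<omega>) + exp (- L1 \<omega>))"
        using T2 T3 i4 i1 by (intro Bochner_Integration.integrable_add Bochner_Integration.integrable_abs) auto
      show "AE \<omega> in M. norm (L1 \<omega>) \<le> norm (\<bar>L2 \<omega>\<bar> + \<bar>L3 \<omega>\<bar> + exp (- L4 \<omega>) + exp (- L1 \<omega>))"
        using b1
      proof eventually_elim
        case (elim \<omega>)
        then show ?case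
          using b2[of \<omega>] exp_gt_zero[of "- L4 \<omega>"] exp_gt_zero[of "- L1 \<omega>"]
          by (simp only: real_norm_def; arith)
      qed
    qed simp
    have "integral\<^sup>L M L1 \<le> (\<integral>\<omega>. L2 \<omega> + L3 \<omega> + exp (- L4 \<omega>) - 1 \<partial>M)"
      using b1 T2 T3 i4 by (intro integral_mono_AE iL1) auto
    also have "\<dots> = integral\<^sup>L M L2 + integral\<^sup>L M L3 + (\<integral>\<omega>. exp (- L4 \<omega>) \<partial>M) - 1"
      using T2 T3 i4 by (simp add: Ic prob_space)
    also have "\<dots> \<le> integral\<^sup>L M L2 + integral\<^sup>L M L3" using I4 by simp
    finally show ?thesis using T2 T3 iL1 by simp
  qed
  show ?thesis using lower upper by blast
qed



lemma ennreal_mul_div_le: "(a::ennreal) * (b / a) \<le> b"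
proof (cases "a = 0 \<or> a = top")
  case True then show ?thesis
    by (auto simp: ennreal_times_divide ennreal_top_divide top_unique)
next
  case False
  then have "a * b / a = b" using mult_divide_eq_ennreal[of a b] by (simp add: mult.commute)
  then show ?thesis by (simp add: ennreal_times_divide)
qed

lemma pw:
  fixes A B C D :: ennreal
  assumes A: "0 < A" "A < \<top>" and B: "0 < B" "B < \<top>" and C: "0 < C" "C < \<top>" and D: "0 < D" "D < \<top>"
  shows "ln (enn2real (A / B)) = ln (enn2real (C / D)) + ln (enn2real (A / C)) - ln (enn2real (B / D))"
    "ennreal (exp (- ln (enn2real (A / B)))) = B / A"
    "ennreal (exp (- ln (enn2real (C / D)))) = D / C"
    "ennreal (exp (- ln (enn2real (B / D)))) = D / B"
    "ennreal (exp (ln (enn2real (C / D)) - ln (enn2real (A / B)))) = C * B / (D * A)"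
proof -
  obtain a where a: "A = ennreal a" "a > 0" using A by (cases A rule: ennreal_cases) auto
  obtain b where b: "B = ennreal b" "b > 0" using B by (cases B rule: ennreal_cases) auto
  obtain c where c: "C = ennreal c" "c > 0" using C by (cases C rule: ennreal_cases) auto
  obtain d where d: "D = ennreal d" "d > 0" using D by (cases D rule: ennreal_cases) auto
  show "ln (enn2real (A / B)) = ln (enn2real (C / D)) + ln (enn2real (A / C)) - ln (enn2real (B / D))"
    using a b c d by (simp add: divide_ennreal ln_div)
  show "ennreal (exp (- ln (enn2real (A / B)))) = B / A"
    using a b by (simp add: divide_ennreal ln_div exp_minus exp_diff)
  show "ennreal (exp (- ln (enn2real (C / D)))) = D / C"
    using c d by (simp add: divide_ennreal ln_div exp_minus exp_diff)
  show "ennreal (exp (- ln (enn2real (B / D)))) = D / B"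
    using b d by (simp add: divide_ennreal ln_div exp_minus exp_diff)
  show "ennreal (exp (ln (enn2real (C / D)) - ln (enn2real (A / B)))) = C * B / (D * A)"
    using a b c d by (simp add: divide_ennreal ln_div exp_diff exp_add ennreal_mult[symmetric] field_simps)
qed

lemma GL:
  assumes F[measurable]: "F \<in> measurable M N" and sR: "sets R = sets N"
    and fQ: "fQ \<in> borel_measurable R" and fP: "fP \<in> borel_measurable R"
    and hQ: "distr M N F = density R fQ" and pP: "prob_space (density R fP)"
  shows "(\<integral>\<^sup>+\<omega>. fP (F \<omega>) / fQ (F \<omega>) \<partial>M) \<le> 1"
proof -
  have fQN[measurable]: "fQ \<in> borel_measurable N" using fQ unfolding measurable_cong_sets[OF sR refl] .
  have fPN[measurable]: "fP \<in> borel_measurable N" using fP unfolding measurable_cong_sets[OF sR refl] .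
  have "(\<integral>\<^sup>+\<omega>. fP (F \<omega>) / fQ (F \<omega>) \<partial>M) = (\<integral>\<^sup>+z. fP z / fQ z \<partial>distr M N F)"
    by (rule nn_integral_distr[symmetric]) measurable
  also have "\<dots> = (\<integral>\<^sup>+z. fQ z * (fP z / fQ z) \<partial>R)"
    unfolding hQ by (rule nn_integral_density) (use fQ fP in measurable)
  also have "\<dots> \<le> (\<integral>\<^sup>+z. fP z \<partial>R)"
    by (intro nn_integral_mono ennreal_mul_div_le)
  also have "\<dots> = emeasure (density R fP) (space R)"
    using fP by (simp add: emeasure_density)
  also have "\<dots> = 1" using prob_space.emeasure_space_1[OF pP] by simp
  finally show ?thesis .
qed



lemma ennreal_div_mul_le: "(b::ennreal) \<noteq> \<top> \<Longrightarrow> x / (c * b) * b \<le> x / c"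
proof (cases "b = 0")
  case True then show ?thesis by simp
next
  case False
  assume "b \<noteq> \<top>"
  then have "x * b / (c * b) = x / c" using False by (intro divide_mult_eq) auto
  then show ?thesis by (simp add: ennreal_divide_times ennreal_times_divide)
qed

lemma ennreal_div_self_le: "(a::ennreal) / b * b \<le> a"
proof -
  have "b / b \<le> 1"
    by (cases "b = 0 \<or> b = \<top>") (auto simp: ennreal_top_divide ennreal_divide_self top.not_eq_extremum)
  then have "a * (b / b) \<le> a * 1" by (intro mult_left_mono) auto
  then show ?thesis by (simp add: ennreal_divide_times)
qed

context L5 begin

definition "L1 \<omega> = ln (enn2real (phi (V \<omega>) (Nv \<omega>) / q (V \<omega>) (Yv \<omega>)))"
definition "L2 \<omega> = ln (enn2real (g (Nv \<omega>) / p (Yv \<omega>)))"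
definition "L3 \<omega> = ln (enn2real (phi (V \<omega>) (Nv \<omega>) / g (Nv \<omega>)))"
definition "L4 \<omega> = ln (enn2real (q (V \<omega>) (Yv \<omega>) / p (Yv \<omega>)))"

lemma AEG: "AE \<omega> in M. V \<omega> > 0 \<and> g (Nv \<omega>) \<noteq> \<infinity> \<and> p (Yv \<omega>) \<noteq> \<infinity>"
  using AEM_g AEM_p Vpos by (auto elim!: eventually_rev_mp intro!: AE_I2)

lemma pwG:
  assumes "V \<omega> > 0 \<and> g (Nv \<omega>) \<noteq> \<infinity> \<and> p (Yv \<omega>) \<noteq> \<infinity>"
  shows "L1 \<omega> = L2 \<omega> + L3 \<omega> - L4 \<omega>"
    "ennreal (exp (- L1 \<omega>)) = q (V \<omega>) (Yv \<omega>) / phi (V \<omega>) (Nv \<omega>)"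
    "ennreal (exp (- L2 \<omega>)) = p (Yv \<omega>) / g (Nv \<omega>)"
    "ennreal (exp (- L4 \<omega>)) = p (Yv \<omega>) / q (V \<omega>) (Yv \<omega>)"
    "ennreal (exp (L2 \<omega> - L1 \<omega>)) = g (Nv \<omega>) * q (V \<omega>) (Yv \<omega>) / (p (Yv \<omega>) * phi (V \<omega>) (Nv \<omega>))"
proof -
  have v: "V \<omega> > 0" using assms by auto
  have A: "0 < phi (V \<omega>) (Nv \<omega>)" "phi (V \<omega>) (Nv \<omega>) < \<top>"
    by (rule phi_pos[OF v]) (simp add: phi_def)
  have B: "0 < q (V \<omega>) (Yv \<omega>)" "q (V \<omega>) (Yv \<omega>) < \<top>"
    using q_pos[OF v] q_fin[OF v] by auto
  have C: "0 < g (Nv \<omega>)" "g (Nv \<omega>) < \<top>"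
    using g_pos assms by (auto simp: top.not_eq_extremum)
  have D: "0 < p (Yv \<omega>)" "p (Yv \<omega>) < \<top>"
    using p_pos assms by (auto simp: top.not_eq_extremum)
  note pw[OF A B C D]
  then show "L1 \<omega> = L2 \<omega> + L3 \<omega> - L4 \<omega>"
    "ennreal (exp (- L1 \<omega>)) = q (V \<omega>) (Yv \<omega>) / phi (V \<omega>) (Nv \<omega>)"
    "ennreal (exp (- L2 \<omega>)) = p (Yv \<omega>) / g (Nv \<omega>)"
    "ennreal (exp (- L4 \<omega>)) = p (Yv \<omega>) / q (V \<omega>) (Yv \<omega>)"
    "ennreal (exp (L2 \<omega> - L1 \<omega>)) = g (Nv \<omega>) * q (V \<omega>) (Yv \<omega>) / (p (Yv \<omega>) * phi (V \<omega>) (Nv \<omega>))"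
    unfolding L1_def L2_def L3_def L4_def by auto
qed

lemma L_meas[measurable]: "L1 \<in> borel_measurable M" "L2 \<in> borel_measurable M"
  "L3 \<in> borel_measurable M" "L4 \<in> borel_measurable M"
  unfolding L1_def[abs_def] L2_def[abs_def] L3_def[abs_def] L4_def[abs_def] by measurable

lemma ident: "AE \<omega> in M. L1 \<omega> = L2 \<omega> + L3 \<omega> - L4 \<omega>"
  using AEG by eventually_elim (rule pwG(1))

lemma A1: "(\<integral>\<^sup>+\<omega>. ennreal (exp (- L1 \<omega>)) \<partial>M) \<le> 1"
proof -
  have "(\<integral>\<^sup>+\<omega>. ennreal (exp (- L1 \<omega>)) \<partial>M) = (\<integral>\<^sup>+\<omega>. q (V \<omega>) (Yv \<omega>) / phi (V \<omega>) (Nv \<omega>) \<partial>M)"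
    by (rule nn_integral_cong_AE) (use AEG in \<open>eventually_elim, simp add: pwG(2)\<close>)
  also have "\<dots> = (\<integral>\<^sup>+\<omega>. (\<lambda>(x,(y,v)). q v y) (X \<omega>, (Yv \<omega>, V \<omega>)) / (\<lambda>(x,(y,v)). phi v (y - x)) (X \<omega>, (Yv \<omega>, V \<omega>)) \<partial>M)"
    by simp
  also have "\<dots> \<le> 1"
  proof (rule GL[OF _ _ _ _ law_XYV])
    show "(\<lambda>\<omega>. (X \<omega>, Yv \<omega>, V \<omega>)) \<in> M \<rightarrow>\<^sub>M borel \<Otimes>\<^sub>M (borel \<Otimes>\<^sub>M borel)" by measurable
    show "sets (mu \<Otimes>\<^sub>M (lborel \<Otimes>\<^sub>M nu)) = sets (borel \<Otimes>\<^sub>M (borel \<Otimes>\<^sub>M borel))" by (simp cong: sets_pair_measure_cong)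
    show "(\<lambda>(x,(y,v)). phi v (y - x)) \<in> borel_measurable (mu \<Otimes>\<^sub>M (lborel \<Otimes>\<^sub>M nu))" by measurable
    show "(\<lambda>(x,(y,v)). q v y) \<in> borel_measurable (mu \<Otimes>\<^sub>M (lborel \<Otimes>\<^sub>M nu))" by measurable
    show "prob_space (density (mu \<Otimes>\<^sub>M (lborel \<Otimes>\<^sub>M nu)) (\<lambda>(x,(y,v)). q v y))"
      unfolding P_XYV[symmetric] by (intro prob_space_pair prob_mu prob_space_distr) simp
  qed
  finally show ?thesis .
qed

lemma A2: "(\<integral>\<^sup>+\<omega>. ennreal (exp (- L2 \<omega>)) \<partial>M) \<le> 1"
proof -
  have "(\<integral>\<^sup>+\<omega>. ennreal (exp (- L2 \<omega>)) \<partial>M) = (\<integral>\<^sup>+\<omega>. p (Yv \<omega>) / g (Nv \<omega>) \<partial>M)"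
    by (rule nn_integral_cong_AE) (use AEG in \<open>eventually_elim, simp add: pwG(3)\<close>)
  also have "\<dots> = (\<integral>\<^sup>+\<omega>. (\<lambda>(x,y). p y) (X \<omega>, Yv \<omega>) / (\<lambda>(x,y). g (y - x)) (X \<omega>, Yv \<omega>) \<partial>M)"
    by simp
  also have "\<dots> \<le> 1"
  proof (rule GL[OF _ _ _ _ law_XY])
    show "(\<lambda>\<omega>. (X \<omega>, Yv \<omega>)) \<in> M \<rightarrow>\<^sub>M borel \<Otimes>\<^sub>M borel" by measurable
    show "sets (mu \<Otimes>\<^sub>M lborel) = sets (borel \<Otimes>\<^sub>M borel)" by (simp cong: sets_pair_measure_cong)
    show "(\<lambda>(x,y). g (y - x)) \<in> borel_measurable (mu \<Otimes>\<^sub>M lborel)" by measurable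
    show "(\<lambda>(x,y). p y) \<in> borel_measurable (mu \<Otimes>\<^sub>M lborel)" by measurable
    show "prob_space (density (mu \<Otimes>\<^sub>M lborel) (\<lambda>(x,y). p y))"
      unfolding P_XY[symmetric] by (intro prob_space_pair prob_mu prob_space_distr) simp
  qed
  finally show ?thesis .
qed

lemma A4: "(\<integral>\<^sup>+\<omega>. ennreal (exp (- L4 \<omega>)) \<partial>M) \<le> 1"
proof -
  have "(\<integral>\<^sup>+\<omega>. ennreal (exp (- L4 \<omega>)) \<partial>M) = (\<integral>\<^sup>+\<omega>. p (Yv \<omega>) / q (V \<omega>) (Yv \<omega>) \<partial>M)"
    by (rule nn_integral_cong_AE) (use AEG in \<open>eventually_elim, simp add: pwG(4)\<close>)
  also have "\<dots> = (\<integral>\<^sup>+\<omega>. (\<lambda>(y,v). p y) (Yv \<omega>, V \<omega>) / (\<lambda>(y,v). q v y) (Yv \<omega>, V \<omega>) \<partial>M)"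
    by simp
  also have "\<dots> \<le> 1"
  proof (rule GL[OF _ _ _ _ law_YV])
    show "(\<lambda>\<omega>. (Yv \<omega>, V \<omega>)) \<in> M \<rightarrow>\<^sub>M borel \<Otimes>\<^sub>M borel" by measurable
    show "sets (lborel \<Otimes>\<^sub>M nu) = sets (borel \<Otimes>\<^sub>M borel)" by (simp cong: sets_pair_measure_cong)
    show "(\<lambda>(y,v). q v y) \<in> borel_measurable (lborel \<Otimes>\<^sub>M nu)" by measurable
    show "(\<lambda>(y,v). p y) \<in> borel_measurable (lborel \<Otimes>\<^sub>M nu)" by measurable
    show "prob_space (density (lborel \<Otimes>\<^sub>M nu) (\<lambda>(y,v). p y))"
      unfolding P_Ynu[symmetric] by (intro prob_space_pair prob_nu prob_space_distr) simp
  qed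
  finally show ?thesis .
qed

lemma q_int: "(\<integral>\<^sup>+v. q v y \<partial>nu) = p y"
proof -
  have "(\<integral>\<^sup>+v. q v y \<partial>nu) = (\<integral>\<^sup>+v. \<integral>\<^sup>+x. phi v (y - x) \<partial>mu \<partial>nu)" by (simp add: q_def)
  also have "\<dots> = (\<integral>\<^sup>+x. \<integral>\<^sup>+v. phi v (y - x) \<partial>nu \<partial>mu)"
    by (rule swap_mu_nu[symmetric]) measurable
  also have "\<dots> = p y" by (simp add: p_def g_def)
  finally show ?thesis .
qed

lemma Wb: "(\<integral>\<^sup>+\<omega>. ennreal (exp (L2 \<omega> - L1 \<omega>)) \<partial>M) \<le> 1"
proof -
  define h where "h = (\<lambda>(x, y, v). g (y - x) * q v y / (p y * phi v (y - x)))"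
  have hm[measurable]: "h \<in> borel_measurable (borel \<Otimes>\<^sub>M (borel \<Otimes>\<^sub>M borel))"
    unfolding h_def by measurable
  have "(\<integral>\<^sup>+\<omega>. ennreal (exp (L2 \<omega> - L1 \<omega>)) \<partial>M) = (\<integral>\<^sup>+\<omega>. h (X \<omega>, Yv \<omega>, V \<omega>) \<partial>M)"
    by (rule nn_integral_cong_AE) (use AEG in \<open>eventually_elim, simp add: pwG(5) h_def\<close>)
  also have "\<dots> = (\<integral>\<^sup>+x. \<integral>\<^sup>+y. \<integral>\<^sup>+v. h (x, y, v) * phi v (y - x) \<partial>nu \<partial>lborel \<partial>mu)"
    by (rule int_XYV) measurable
  also have "\<dots> \<le> (\<integral>\<^sup>+x. \<integral>\<^sup>+y. \<integral>\<^sup>+v. g (y - x) / p y * q v y \<partial>nu \<partial>lborel \<partial>mu)"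
  proof (intro nn_integral_mono)
    fix x y v
    have "h (x, y, v) * phi v (y - x) \<le> g (y - x) * q v y / p y"
      unfolding h_def by (simp add: ennreal_div_mul_le phi_def)
    then show "h (x, y, v) * phi v (y - x) \<le> g (y - x) / p y * q v y"
      by (simp add: ennreal_divide_times ennreal_times_divide)
  qed
  also have "\<dots> = (\<integral>\<^sup>+x. \<integral>\<^sup>+y. g (y - x) / p y * p y \<partial>lborel \<partial>mu)"
    by (intro nn_integral_cong) (simp add: nn_integral_cmult q_int)
  also have "\<dots> \<le> (\<integral>\<^sup>+x. \<integral>\<^sup>+y. 1 * g (y - x) \<partial>lborel \<partial>mu)"
    by (intro nn_integral_mono) (simp add: ennreal_div_self_le)
  also have "\<dots> = (\<integral>\<^sup>+\<omega>. 1 \<partial>M)"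
    by (rule int_XY[where h="\<lambda>_. 1", symmetric]) simp
  also have "\<dots> = 1" by (simp add: emeasure_space_1)
  finally show ?thesis .
qed

lemma main:
  "MI M borel borel X Yv \<le> MI M borel (borel \<Otimes>\<^sub>M borel) X (\<lambda>\<omega>. (Yv \<omega>, V \<omega>))
   \<and> MI M borel (borel \<Otimes>\<^sub>M borel) X (\<lambda>\<omega>. (Yv \<omega>, V \<omega>)) \<le> MI M borel borel X Yv + MI M borel borel V Nv"
  using AL[OF prob L_meas ident Wb A1 A2 A4]
  unfolding MI_XY MI_XYV MI_VN L1_def[symmetric] L2_def[symmetric] L3_def[symmetric] .

end



theorem lemma5:
  fixes M :: "'a measure"
    and X Z :: "'a \<Rightarrow> real^'p"
    and V :: "'a \<Rightarrow> real"
  assumes "prob_space M"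
    and "X \<in> measurable M borel"
    and "V \<in> borel_measurable M"
    and "\<forall>\<omega>\<in>space M. V \<omega> > 0"
    and "distributed M lborel Z std_gauss_density"
    and "indep3 M borel X borel V borel Z"
  shows "let N = (\<lambda>\<omega>. sqrt (V \<omega>) *\<^sub>R Z \<omega>);
             Y = (\<lambda>\<omega>. X \<omega> + N \<omega>)
         in MI M borel borel X Y \<le> CMI M borel borel borel X Y V
          \<and> CMI M borel borel borel X Y V \<le> MI M borel borel X Y + MI M borel borel V N"
proof -
  interpret L5 M X Z V by (rule L5.intro[OF assms])
  show ?thesis unfolding Let_def CMI_def MI_XV using main by simp
qed

end
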